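(* Let $\mathcal{S}$ be a finite set of points of interest and, for each history $X$, let $P(\cdot\mid X)$ be a distribution on $\mathcal{S}$ with $\Delta_P\le P(s\mid X)\le1-\Delta_P$ for all $(X,s)$, for some $\Delta_P\in(0,0.5)$. Let $\Theta=\{\theta_1,\dots,\theta_K\}\subset[1,\infty)$ be a finite set of distinct parameters with prior $P_0$ (positive on $\Theta$), and for $\theta\in\Theta$ define the transition model \[ P(s\mid X,a,\theta)=\begin{cases}P(s\mid X)^{1/\theta},& s=a,\\ P(s\mid X)\,\dfrac{1-P(a\mid X)^{1/\theta}}{1-P(a\mid X)}, & s\neq a.\end{cases} \] The true parameter is $\theta_*\in\Theta$. At each time $t=1,2,\dots$, given the history $X_t$, a recommendation $a_t\in\mathcal{S}$ is chosen based on the past, and $s_t\sim P(\cdot\mid X_t,a_t,\theta_* )$ is observed and appended to the history. Let $P_t(\theta)\propto P_0(\theta)\prod_{\tau=1}^tP(s_\tau\mid X_\tau,a_\tau,\theta)$ be the posterior at the end of time $t$, and let $\theta_t$ be sampled from $P_t$ at time step $t$. Define $\Delta_\theta=\min_{\theta\in\Theta,\theta\ne\theta_*}|\theta-\theta_*|$, \[ B=2\max\Big\{\max_{\theta\in\Theta}\max_{p\in[\Delta_P,1-\Delta_P]}\Big|\log\frac{p^{1/\theta}}{p^{1/\theta_*}}\Big|,\ \max_{\theta\in\Theta}\max_{p\in[\Delta_P,1-\Delta_P]}\Big|\log\frac{1-p^{1/\theta}}{1-p^{1/\theta_*}}\Big|\Big\}, \] \[ c_0=\frac{\min\{\ln(1/\Delta_P)\Delta_P,\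 \ln(1/(1-\Delta_P))(1-\Delta_P)\}}{(\max_{\theta\in\Theta}\theta)^2},\qquad \kappa=\Big(\max_{\theta\in\Theta}\theta-\min_{\theta\in\Theta}\theta\Big)^2. \] Then for every $t>2$, \[ \mathbb{E}\big[(\theta_t-\theta_* )^2\mid\theta_*\big]\le\frac{3}{e c_0^2t}\,\frac{1-P_0(\theta_* )}{P_0(\theta_* )}\exp\Big\{-c_0^2\Delta_\theta^2t+\sqrt{2B^2t\ln(K\kappa t^2)}\Big\}+\frac{1}{t^2}. \] *)

theory Defs
  imports "HOL-Analysis.Analysis"
begin

text \<open>Trajectories are lists of steps (a, s, theta): the recommendation a_k, the observed
  point s_k and the posterior sample theta_k, in chronological order.\<close>

type_synonym 's step = "'s \<times> 's \<times> real"

definition rec_of :: "'s step \<Rightarrow> 's" where "rec_of x = fst x"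
definition obs_of :: "'s step \<Rightarrow> 's" where "obs_of x = fst (snd x)"
definition smp_of :: "'s step \<Rightarrow> real" where "smp_of x = snd (snd x)"

definition hist :: "'s list \<Rightarrow> 's step list \<Rightarrow> 's list" where
  "hist X0 tr = X0 @ map obs_of tr"

definition trans_model :: "('s list \<Rightarrow> 's \<Rightarrow> real) \<Rightarrow> 's list \<Rightarrow> 's \<Rightarrow> real \<Rightarrow> 's \<Rightarrow> real" where
  "trans_model P X a \<theta> s =
     (if s = a then P X s powr (1 / \<theta>)
      else P X s * (1 - P X a powr (1 / \<theta>)) / (1 - P X a))"

definition likelihood :: "('s list \<Rightarrow> 's \<Rightarrow> real) \<Rightarrow> 's list \<Rightarrow> 's step list \<Rightarrow> real \<Rightarrow> real" where
  "likelihood P X0 tr \<theta> =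
     (\<Prod>k<length tr. trans_model P (hist X0 (take k tr)) (rec_of (tr ! k)) \<theta> (obs_of (tr ! k)))"

definition posterior :: "('s list \<Rightarrow> 's \<Rightarrow> real) \<Rightarrow> (real \<Rightarrow> real) \<Rightarrow> real set \<Rightarrow> 's list
    \<Rightarrow> 's step list \<Rightarrow> real \<Rightarrow> real" where
  "posterior P P0 \<Theta> X0 tr \<theta> =
     P0 \<theta> * likelihood P X0 tr \<theta> / (\<Sum>\<theta>'\<in>\<Theta>. P0 \<theta>' * likelihood P X0 tr \<theta>')"

text \<open>Probability of a trajectory: at step k+1 the recommendation is drawn from the
  (possibly randomized) policy pi given the past, the observation from the true
  transition model, and the sample from the posterior at the end of that step.\<close>
definition traj_prob :: "('s list \<Rightarrow> 's \<Rightarrow> real) \<Rightarrow> (real \<Rightarrow> real) \<Rightarrow> real set \<Rightarrow> 's list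
    \<Rightarrow> ('s step list \<Rightarrow> 's \<Rightarrow> real) \<Rightarrow> real \<Rightarrow> 's step list \<Rightarrow> real" where
  "traj_prob P P0 \<Theta> X0 \<pi> \<theta>s tr =
     (\<Prod>k<length tr.
        \<pi> (take k tr) (rec_of (tr ! k))
        * trans_model P (hist X0 (take k tr)) (rec_of (tr ! k)) \<theta>s (obs_of (tr ! k))
        * posterior P P0 \<Theta> X0 (take (Suc k) tr) (smp_of (tr ! k)))"

definition expected_sq_err :: "'s set \<Rightarrow> ('s list \<Rightarrow> 's \<Rightarrow> real) \<Rightarrow> (real \<Rightarrow> real) \<Rightarrow> real set
    \<Rightarrow> 's list \<Rightarrow> ('s step list \<Rightarrow> 's \<Rightarrow> real) \<Rightarrow> real \<Rightarrow> nat \<Rightarrow> real" where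
  "expected_sq_err S P P0 \<Theta> X0 \<pi> \<theta>s t =
     (\<Sum>tr\<in>{tr. set tr \<subseteq> S \<times> S \<times> \<Theta> \<and> length tr = t}.
        traj_prob P P0 \<Theta> X0 \<pi> \<theta>s tr * (smp_of (last tr) - \<theta>s)\<^sup>2)"

end

theory Submission
  imports Defs "HOL-Probability.Hoeffding"
begin


lemma hoeff2_aux:
  fixes q l y1 y2 :: real
  assumes "0 \<le> q" "q \<le> 1" "0 \<le> l" "y2 \<le> y1"
  shows "q * exp (l*y1) + (1-q) * exp (l*y2) \<le> exp (l*(q*y1 + (1-q)*y2) + l^2*(y1-y2)^2/8)"
proof -
  define h where "h = l*(y1-y2)"
  have h0: "h \<ge> 0" using assms by (simp add: h_def)
  have H: "-h*q + ln (1 + q*(exp h - 1)) \<le> h^2/8"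
    using Hoeffdings_lemma_aux[of h q] h0 assms by simp
  have pos: "1 + q*(exp h - 1) > 0"
    using h0 assms by (smt (verit) mult_nonneg_nonneg one_le_exp_iff)
  have "1 + q*(exp h - 1) = exp (ln (1 + q*(exp h - 1)))" using pos by simp
  also have "\<dots> \<le> exp (h*q + h^2/8)" using H by simp
  finally have A: "1 + q*(exp h - 1) \<le> exp (h*q + h^2/8)" .
  have "q * exp (l*y1) + (1-q) * exp (l*y2) = exp (l*y2) * (1 + q*(exp h - 1))"
    by (simp add: h_def algebra_simps flip: exp_add)
  also have "\<dots> \<le> exp (l*y2) * exp (h*q + h^2/8)"
    using A by (intro mult_left_mono) auto
  also have "\<dots> = exp (l*(q*y1 + (1-q)*y2) + l^2*(y1-y2)^2/8)"
    by (simp add: h_def algebra_simps power2_eq_square flip: exp_add)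
  finally show ?thesis .
qed

lemma hoeff2:
  fixes q l y1 y2 :: real
  assumes "0 \<le> q" "q \<le> 1" "0 \<le> l"
  shows "q * exp (l*y1) + (1-q) * exp (l*y2) \<le> exp (l*(q*y1 + (1-q)*y2) + l^2*(y1-y2)^2/8)"
proof (cases "y2 \<le> y1")
  case True then show ?thesis using hoeff2_aux assms by blast
next
  case False
  have "(1-q) * exp (l*y2) + (1-(1-q)) * exp (l*y1)
        \<le> exp (l*((1-q)*y2 + (1-(1-q))*y1) + l^2*(y2-y1)^2/8)"
    using hoeff2_aux[of "1-q" l y1 y2] False assms by simp
  then show ?thesis by (simp add: algebra_simps power2_commute)
qed

lemma pinsker_bern:
  fixes a x :: real
  assumes a: "0 < a" "a < 1" and x: "0 < x" "x < 1"
  shows "a * ln (x/a) + (1-a) * ln ((1-x)/(1-a)) \<le> -2*(x-a)^2"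
proof -
  define f where "f = (\<lambda>x. a * ln x - a * ln a + (1-a) * ln (1-x) - (1-a) * ln (1-a) + 2*(x-a)^2)"
  define f' where "f' = (\<lambda>x::real. a/x - (1-a)/(1-x) + 4*(x-a))"
  have der: "DERIV f z :> f' z" if "0 < z" "z < 1" for z
    unfolding f_def f'_def using that
    by (auto intro!: derivative_eq_intros simp: power2_eq_square algebra_simps) (simp add: add_divide_distrib[symmetric])
  have f'eq: "f' z = (a - z) * (1/(z*(1-z)) - 4)" if "0 < z" "z < 1" for z
    unfolding f'_def using that by (simp add: field_simps)
  have big: "1/(z*(1-z)) \<ge> 4" if "0 < z" "z < 1" for z :: real
  proof -
    have "z*(1-z) \<le> 1/4" using mult_const_minus_self_real_le[of z 1] by simp
    moreover have "z*(1-z) > 0" using that by simp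
    ultimately show ?thesis by (simp add: field_simps)
  qed
  have fa: "f a = 0" by (simp add: f_def)
  have "f x \<le> 0"
  proof (cases x a rule: linorder_cases)
    case less
    obtain z where z: "x < z" "z < a" "f a - f x = (a - x) * f' z"
      using MVT2[of x a f f'] less der x a by force
    have "f' z \<ge> 0" using f'eq[of z] big[of z] z x a by simp
    then show ?thesis using z fa less by (smt (verit) mult_nonneg_nonneg)
  next
    case equal then show ?thesis using fa by simp
  next
    case greater
    obtain z where z: "a < z" "z < x" "f x - f a = (x - a) * f' z"
      using MVT2[of a x f f'] greater der x a by force
    have "f' z \<le> 0" using f'eq[of z] big[of z] z x a
      by (simp add: mult_nonpos_nonneg)
    then show ?thesis using z fa greater by (smt (verit) mult_nonneg_nonpos)
  qed
  moreover have "a * ln (x/a) + (1-a) * ln ((1-x)/(1-a)) = f x - 2*(x-a)^2"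
    using a x by (simp add: f_def ln_div algebra_simps)
  ultimately show ?thesis by linarith
qed

lemma powr_gap:
  fixes p u w :: real
  assumes "0 < p" "p < 1" "0 < u" "u \<le> w" "w \<le> 1"
  shows "p powr u - p powr w \<ge> p * (w-u) * (- ln p)"
proof -
  have e: "p powr (u - w) \<ge> 1 + (w-u) * (- ln p)"
    using exp_ge_add_one_self[of "(u-w) * ln p"] assms by (simp add: powr_def algebra_simps)
  have pu: "p powr u = p powr w * p powr (u - w)" by (simp flip: powr_add)
  have pw: "p powr w \<ge> p" using powr_mono'[of w 1 p] assms by simp
  have "ln p < 0" using assms by simp
  then have nn: "(w-u) * (- ln p) \<ge> 0" using assms mult_nonneg_nonpos[of "w-u" "ln p"] by simp
  have "p powr u - p powr w = p powr w * (p powr (u-w) - 1)" using pu by (simp add: algebra_simps)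
  also have "\<dots> \<ge> p powr w * ((w-u) * (- ln p))" using e
    by (intro mult_left_mono) auto
  finally have "p powr u - p powr w \<ge> p powr w * ((w-u) * (- ln p))" .
  moreover have "p powr w * ((w-u) * (- ln p)) \<ge> p * ((w-u) * (- ln p))"
    using pw nn by (intro mult_right_mono) auto
  ultimately show ?thesis by simp
qed

lemma ent_min:
  fixes p d :: real
  assumes d: "0 < d" "d < 1/2" and p: "d \<le> p" "p \<le> 1 - d"
  shows "- p * ln p \<ge> min (ln (1/d) * d) (ln (1/(1-d)) * (1-d))"
proof -
  define g where "g = (\<lambda>x::real. - x * ln x)"
  define g' where "g' = (\<lambda>x::real. - ln x - 1)"
  have der: "DERIV g z :> g' z" if "0 < z" for z
    unfolding g_def g'_def using that by (auto intro!: derivative_eq_intros)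
  have m1: "ln (1/d) * d = g d" "ln (1/(1-d)) * (1-d) = g (1-d)"
    using d by (simp_all add: g_def ln_div)
  show ?thesis
  proof (cases "p \<le> exp (-1)")
    case True
    show ?thesis
    proof (cases "d < p")
      case True
      obtain z where z: "d < z" "z < p" "g p - g d = (p - d) * g' z"
        using MVT2[of d p g g'] True der d by force
      have "ln z < ln (exp (-1))" using z \<open>p \<le> exp (-1)\<close> d by (subst ln_less_cancel_iff) auto
      then have "g' z > 0" by (simp add: g'_def)
      then have "g p \<ge> g d" using z by (smt (verit) mult_pos_pos)
      then show ?thesis using m1 by (simp add: g_def)
    next
      case False then have "p = d" using p by simp
      then show ?thesis using m1 by (simp add: g_def)
    qed
  next
    case False
    show ?thesis
    proof (cases "p < 1 - d")
      case True
      obtain z where z: "p < z" "z < 1-d" "g (1-d) - g p = (1-d-p) * g' z"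
        using MVT2[of p "1-d" g g'] True der d p by force
      have "ln (exp (-1)) < ln z" using z False d p by (subst ln_less_cancel_iff) auto
      then have "g' z < 0" by (simp add: g'_def)
      then have "g p \<ge> g (1-d)" using z by (smt (verit) mult_pos_neg)
      then show ?thesis using m1 by (simp add: g_def)
    next
      case False then have "p = 1-d" using p by simp
      then have "- p * ln p = g (1-d)" unfolding g_def by simp
      then show ?thesis using m1 min.cobounded2[of "ln (1/d)*d" "ln (1/(1-d))*(1-d)"] by simp
    qed
  qed
qed



locale LS =
  fixes S :: "'s set" and P :: "'s list \<Rightarrow> 's \<Rightarrow> real" and \<Delta>P :: real
    and \<Theta> :: "real set" and P0 :: "real \<Rightarrow> real" and \<theta>s :: real
    and X0 :: "'s list" and \<pi> :: "'s step list \<Rightarrow> 's \<Rightarrow> real"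
  assumes S_fin: "finite S"
    and P_distr: "\<And>X. (\<Sum>s\<in>S. P X s) = 1"
    and P_bounds: "\<And>X s. s \<in> S \<Longrightarrow> \<Delta>P \<le> P X s \<and> P X s \<le> 1 - \<Delta>P"
    and \<Delta>P_pos: "0 < \<Delta>P" and \<Delta>P_half: "\<Delta>P < 1/2"
    and \<Theta>_fin: "finite \<Theta>"
    and \<Theta>_ge1: "\<And>\<theta>. \<theta> \<in> \<Theta> \<Longrightarrow> 1 \<le> \<theta>"
    and P0_pos: "\<And>\<theta>. \<theta> \<in> \<Theta> \<Longrightarrow> 0 < P0 \<theta>"
    and P0_sum: "(\<Sum>\<theta>\<in>\<Theta>. P0 \<theta>) = 1"
    and \<theta>s_in: "\<theta>s \<in> \<Theta>"
    and \<pi>_nonneg: "\<And>tr a. 0 \<le> \<pi> tr a"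
    and \<pi>_distr: "\<And>tr. (\<Sum>a\<in>S. \<pi> tr a) = 1"
begin

definition St where "St = S \<times> S \<times> \<Theta>"
definition T where "T n = {tr. set tr \<subseteq> St \<and> length tr = n}"
definition F where "F tr x = \<pi> tr (rec_of x) * trans_model P (hist X0 tr) (rec_of x) \<theta>s (obs_of x)
   * posterior P P0 \<Theta> X0 (tr @ [x]) (smp_of x)"
definition E where "E n g = (\<Sum>tr\<in>T n. traj_prob P P0 \<Theta> X0 \<pi> \<theta>s tr * g tr)"

lemma Pb: "s \<in> S \<Longrightarrow> 0 < P X s \<and> P X s < 1"
  using P_bounds[of s X] \<Delta>P_pos \<Delta>P_half by auto

lemma trans_pos: assumes "a \<in> S" "s \<in> S" "0 < \<theta>" shows "0 < trans_model P X a \<theta> s"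
proof -
  have pa: "0 < P X a" "P X a < 1" and ps: "0 < P X s" using Pb assms by auto
  have "P X a powr (1/\<theta>) < 1 powr (1/\<theta>)"
    using pa assms by (intro powr_less_mono2) auto
  then have "1 - P X a powr (1/\<theta>) > 0" by simp
  then show ?thesis using pa ps unfolding trans_model_def by auto
qed

lemma trans_sum: assumes "a \<in> S" "0 < \<theta>" shows "(\<Sum>s\<in>S. trans_model P X a \<theta> s) = 1"
proof -
  have pa: "0 < P X a" "P X a < 1" using Pb assms by auto
  have r: "(\<Sum>s\<in>S-{a}. P X s) = 1 - P X a"
    using sum.remove[OF S_fin assms(1), of "P X"] P_distr[of X] by simp
  have "(\<Sum>s\<in>S-{a}. trans_model P X a \<theta> s)
      = (\<Sum>s\<in>S-{a}. P X s * (1 - P X a powr (1/\<theta>)) / (1 - P X a))"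
    by (rule sum.cong) (auto simp: trans_model_def)
  also have "\<dots> = (\<Sum>s\<in>S-{a}. P X s) * (1 - P X a powr (1/\<theta>)) / (1 - P X a)"
    by (simp add: sum_divide_distrib sum_distrib_right)
  also have "\<dots> = 1 - P X a powr (1/\<theta>)" using r pa by simp
  finally show ?thesis
    using sum.remove[OF S_fin assms(1), of "trans_model P X a \<theta>"]
    by (simp add: trans_model_def)
qed

lemma lik_snoc: "likelihood P X0 (tr @ [x]) \<theta>
   = likelihood P X0 tr \<theta> * trans_model P (hist X0 tr) (rec_of x) \<theta> (obs_of x)"
  unfolding likelihood_def
  apply (simp only: length_append_singleton prod.lessThan_Suc)
  apply (rule arg_cong2[where f="(*)"])
   apply (rule prod.cong[OF refl])
   apply (simp add: nth_append)
  apply simp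
  done

lemma lik_nil: "likelihood P X0 [] \<theta> = 1"
  unfolding likelihood_def by simp

lemma traj_snoc: "traj_prob P P0 \<Theta> X0 \<pi> \<theta>s (tr @ [x]) = traj_prob P P0 \<Theta> X0 \<pi> \<theta>s tr * F tr x"
  unfolding traj_prob_def F_def
  apply (simp only: length_append_singleton prod.lessThan_Suc)
  apply (rule arg_cong2[where f="(*)"])
   apply (rule prod.cong[OF refl])
   apply (simp add: nth_append)
  apply (simp add: mult.assoc)
  done

lemma traj_nil: "traj_prob P P0 \<Theta> X0 \<pi> \<theta>s [] = 1"
  unfolding traj_prob_def by simp

lemma \<Theta>_pos: "\<theta> \<in> \<Theta> \<Longrightarrow> 0 < \<theta>"
  using \<Theta>_ge1[of \<theta>] by simp

lemma lik_pos: assumes "set tr \<subseteq> St" "\<theta> \<in> \<Theta>" shows "0 < likelihood P X0 tr \<theta>"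
  unfolding likelihood_def
proof (rule prod_pos)
  fix k assume "k \<in> {..<length tr}"
  then have "tr ! k \<in> St" using assms nth_mem by blast
  then show "0 < trans_model P (hist X0 (take k tr)) (rec_of (tr ! k)) \<theta> (obs_of (tr ! k))"
    using assms \<Theta>_pos by (intro trans_pos) (auto simp: St_def rec_of_def obs_of_def)
qed

lemma Z_pos: assumes "set tr \<subseteq> St" shows "0 < (\<Sum>\<theta>'\<in>\<Theta>. P0 \<theta>' * likelihood P X0 tr \<theta>')"
proof (rule sum_pos)
  show "finite \<Theta>" by (rule \<Theta>_fin)
  show "\<Theta> \<noteq> {}" using \<theta>s_in by blast
  fix \<theta> assume "\<theta> \<in> \<Theta>"
  then show "0 < P0 \<theta> * likelihood P X0 tr \<theta>"
    using P0_pos lik_pos assms by simp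
qed

lemma post_nonneg: assumes "set tr \<subseteq> St" "\<theta> \<in> \<Theta>" shows "0 \<le> posterior P P0 \<Theta> X0 tr \<theta>"
  unfolding posterior_def using Z_pos[OF assms(1)] P0_pos[OF assms(2)] lik_pos[OF assms]
  by simp

lemma post_sum: assumes "set tr \<subseteq> St" shows "(\<Sum>\<theta>\<in>\<Theta>. posterior P P0 \<Theta> X0 tr \<theta>) = 1"
  unfolding posterior_def using Z_pos[OF assms(1)]
  by (simp add: sum_divide_distrib[symmetric])

lemma post_indep: "posterior P P0 \<Theta> X0 (tr @ [(a,s,u)]) \<theta> = posterior P P0 \<Theta> X0 (tr @ [(a,s,v)]) \<theta>"
  unfolding posterior_def lik_snoc by (simp add: rec_of_def obs_of_def)

lemma St_mem: "x \<in> St \<Longrightarrow> rec_of x \<in> S \<and> obs_of x \<in> S \<and> smp_of x \<in> \<Theta>"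
  unfolding St_def rec_of_def obs_of_def smp_of_def by (simp add: mem_Times_iff)

lemma traj_nonneg: assumes "set tr \<subseteq> St" shows "0 \<le> traj_prob P P0 \<Theta> X0 \<pi> \<theta>s tr"
  unfolding traj_prob_def
proof (rule prod_nonneg)
  fix k assume k: "k \<in> {..<length tr}"
  then have "tr ! k \<in> set tr" by (intro nth_mem) simp
  then have m: "tr ! k \<in> St" using assms by (rule subsetD[rotated])
  have "set (take (Suc k) tr) \<subseteq> St" using assms set_take_subset by (rule order_trans[rotated])
  then have 1: "0 \<le> posterior P P0 \<Theta> X0 (take (Suc k) tr) (smp_of (tr ! k))"
    using St_mem[OF m] post_nonneg by blast
  have 2: "0 < trans_model P (hist X0 (take k tr)) (rec_of (tr ! k)) \<theta>s (obs_of (tr ! k))"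
    using St_mem[OF m] \<theta>s_in \<Theta>_pos trans_pos by blast
  show "0 \<le> \<pi> (take k tr) (rec_of (tr ! k)) *
          trans_model P (hist X0 (take k tr)) (rec_of (tr ! k)) \<theta>s (obs_of (tr ! k)) *
          posterior P P0 \<Theta> X0 (take (Suc k) tr) (smp_of (tr ! k))"
    using \<pi>_nonneg[of "take k tr" "rec_of (tr ! k)"] 1 2 by (intro mult_nonneg_nonneg) auto
qed

lemma St_fin: "finite St" unfolding St_def using S_fin \<Theta>_fin by simp

lemma T_fin: "finite (T n)" unfolding T_def using finite_lists_length_eq[OF St_fin] by simp

lemma T_0: "T 0 = {[]}" unfolding T_def by auto

lemma sum_T_Suc: "(\<Sum>tr\<in>T (Suc n). g tr) = (\<Sum>tr\<in>T n. \<Sum>x\<in>St. g (tr @ [x]))"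
proof -
  have eq: "T (Suc n) = (\<lambda>(tr,x). tr @ [x]) ` (T n \<times> St)"
  proof
    show "T (Suc n) \<subseteq> (\<lambda>(tr,x). tr @ [x]) ` (T n \<times> St)"
    proof
      fix tr assume "tr \<in> T (Suc n)"
      then have tr: "set tr \<subseteq> St" "length tr = Suc n" by (auto simp: T_def)
      then have ne: "tr \<noteq> []" by auto
      then have "tr = butlast tr @ [last tr]" by simp
      moreover have "butlast tr \<in> T n" using tr in_set_butlastD by (fastforce simp: T_def)
      moreover have "last tr \<in> St" using tr ne by auto
      ultimately show "tr \<in> (\<lambda>(tr,x). tr @ [x]) ` (T n \<times> St)" by force
    qed
  next
    show "(\<lambda>(tr,x). tr @ [x]) ` (T n \<times> St) \<subseteq> T (Suc n)" by (auto simp: T_def)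
  qed
  have inj: "inj_on (\<lambda>(tr,x). tr @ [x]) (T n \<times> St)"
    by (auto simp: inj_on_def)
  show ?thesis
    unfolding eq sum.reindex[OF inj] by (auto simp: sum.cartesian_product intro!: sum.cong)
qed

lemma sum_St: "(\<Sum>x\<in>St. g x) = (\<Sum>a\<in>S. \<Sum>s\<in>S. \<Sum>\<theta>\<in>\<Theta>. g (a,s,\<theta>))"
  unfolding St_def by (simp add: sum.cartesian_product)

lemma E_Suc: "E (Suc n) g = (\<Sum>tr\<in>T n. traj_prob P P0 \<Theta> X0 \<pi> \<theta>s tr * (\<Sum>x\<in>St. F tr x * g (tr @ [x])))"
  unfolding E_def sum_T_Suc traj_snoc by (simp add: sum_distrib_left mult.assoc)

lemma F_split:
  assumes "set tr \<subseteq> St"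
  shows "(\<Sum>x\<in>St. F tr x * G (rec_of x) (obs_of x))
     = (\<Sum>a\<in>S. \<pi> tr a * (\<Sum>s\<in>S. trans_model P (hist X0 tr) a \<theta>s s * G a s))"
proof -
  have "(\<Sum>\<theta>'\<in>\<Theta>. F tr (a,s,\<theta>') * G a s) = \<pi> tr a * trans_model P (hist X0 tr) a \<theta>s s * G a s"
    if "a \<in> S" "s \<in> S" for a s
  proof -
    have "(\<Sum>\<theta>'\<in>\<Theta>. F tr (a,s,\<theta>') * G a s)
        = (\<Sum>\<theta>'\<in>\<Theta>. \<pi> tr a * trans_model P (hist X0 tr) a \<theta>s s * G a s
             * posterior P P0 \<Theta> X0 (tr @ [(a,s,\<theta>s)]) \<theta>')"
      unfolding F_def rec_of_def obs_of_def smp_of_def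
      by (rule sum.cong[OF refl], subst post_indep[where v=\<theta>s]) (simp add: ac_simps)
    also have "\<dots> = \<pi> tr a * trans_model P (hist X0 tr) a \<theta>s s * G a s
             * (\<Sum>\<theta>'\<in>\<Theta>. posterior P P0 \<Theta> X0 (tr @ [(a,s,\<theta>s)]) \<theta>')"
      by (simp add: sum_distrib_left)
    also have "\<dots> = \<pi> tr a * trans_model P (hist X0 tr) a \<theta>s s * G a s"
      using assms that \<theta>s_in by (subst post_sum) (auto simp: St_def)
    finally show ?thesis .
  qed
  then show ?thesis
    unfolding sum_St by (simp add: rec_of_def obs_of_def sum_distrib_left mult.assoc)
qed

lemma E_0: "E 0 g = g []" unfolding E_def T_0 by (simp add: traj_nil)

lemma supermart:
  assumes c: "0 \<le> c" and W: "\<And>tr. set tr \<subseteq> St \<Longrightarrow> 0 \<le> W tr"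
    and step: "\<And>tr. set tr \<subseteq> St \<Longrightarrow> (\<Sum>x\<in>St. F tr x * W (tr @ [x])) \<le> c * W tr"
  shows "E n W \<le> c ^ n * W []"
proof (induction n)
  case 0 then show ?case by (simp add: E_0)
next
  case (Suc n)
  have "E (Suc n) W \<le> (\<Sum>tr\<in>T n. traj_prob P P0 \<Theta> X0 \<pi> \<theta>s tr * (c * W tr))"
    unfolding E_Suc
    by (intro sum_mono mult_left_mono step traj_nonneg) (auto simp: T_def)
  also have "\<dots> = c * E n W" by (simp add: E_def sum_distrib_left algebra_simps)
  also have "\<dots> \<le> c * (c ^ n * W [])" using Suc c by (intro mult_left_mono) auto
  finally show ?case by simp
qed

lemma E_mono: assumes "\<And>tr. tr \<in> T n \<Longrightarrow> f tr \<le> g tr" shows "E n f \<le> E n g"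
  unfolding E_def using assms
  by (intro sum_mono mult_left_mono traj_nonneg) (auto simp: T_def)

lemma E_add: "E n (\<lambda>tr. f tr + g tr) = E n f + E n g"
  unfolding E_def by (simp add: algebra_simps sum.distrib)

lemma E_cmult: "E n (\<lambda>tr. c * f tr) = c * E n f"
  unfolding E_def by (simp add: algebra_simps sum_distrib_left)

lemma E_sum: "E n (\<lambda>tr. \<Sum>i\<in>I. f i tr) = (\<Sum>i\<in>I. E n (f i))"
  unfolding E_def sum_distrib_left by (rule sum.swap)

lemma F_sum1: assumes "set tr \<subseteq> St" shows "(\<Sum>x\<in>St. F tr x) = 1"
  using F_split[OF assms, of "\<lambda>_ _. 1"] \<pi>_distr trans_sum \<theta>s_in \<Theta>_pos
  by simp

lemma E_const: assumes "0 \<le> c" shows "E n (\<lambda>_. c) \<le> c"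
  using supermart[of 1 "\<lambda>_. c" n] assms F_sum1 by (simp add: sum_distrib_right[symmetric])


definition Bc where "Bc = 2 * max
          (Max ((\<lambda>\<theta>. SUP p\<in>{\<Delta>P..1 - \<Delta>P}. \<bar>ln (p powr (1/\<theta>) / p powr (1/\<theta>s))\<bar>) ` \<Theta>))
          (Max ((\<lambda>\<theta>. SUP p\<in>{\<Delta>P..1 - \<Delta>P}.
                   \<bar>ln ((1 - p powr (1/\<theta>)) / (1 - p powr (1/\<theta>s)))\<bar>) ` \<Theta>))"
definition mm where "mm = min (ln (1/\<Delta>P) * \<Delta>P) (ln (1/(1 - \<Delta>P)) * (1 - \<Delta>P))"
definition c0c where "c0c = mm / (Max \<Theta>)\<^sup>2"

lemma mm_pos: "0 < mm"
proof -
  have "ln (1/\<Delta>P) > 0" "ln (1/(1-\<Delta>P)) > 0" using \<Delta>P_pos \<Delta>P_half by simp_all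
  then show ?thesis unfolding mm_def using \<Delta>P_pos \<Delta>P_half by simp
qed

lemma Max_ge': "\<theta> \<in> \<Theta> \<Longrightarrow> \<theta> \<le> Max \<Theta>" using \<Theta>_fin by simp
lemma Min_le': "\<theta> \<in> \<Theta> \<Longrightarrow> Min \<Theta> \<le> \<theta>" using \<Theta>_fin by simp
lemma Max_ge1: "1 \<le> Max \<Theta>" using Max_ge'[OF \<theta>s_in] \<Theta>_ge1[OF \<theta>s_in] by simp

lemma c0_pos: "0 < c0c" unfolding c0c_def using mm_pos Max_ge1 by simp

lemma gap_aux:
  assumes "\<theta>1 \<in> \<Theta>" "\<theta>2 \<in> \<Theta>" "\<theta>2 \<le> \<theta>1" and p: "\<Delta>P \<le> p" "p \<le> 1 - \<Delta>P"
  shows "p powr (1/\<theta>1) - p powr (1/\<theta>2) \<ge> c0c * (\<theta>1 - \<theta>2)"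
proof -
  have t1: "1 \<le> \<theta>1" "\<theta>1 \<le> Max \<Theta>" and t2: "1 \<le> \<theta>2" "\<theta>2 \<le> Max \<Theta>"
    using assms \<Theta>_ge1 Max_ge' by auto
  have p01: "0 < p" "p < 1" using p \<Delta>P_pos \<Delta>P_half by auto
  have uw: "0 < 1/\<theta>1" "1/\<theta>1 \<le> 1/\<theta>2" "1/\<theta>2 \<le> 1" using t1 t2 assms(3)
    by (auto simp: field_simps)
  have g: "p powr (1/\<theta>1) - p powr (1/\<theta>2) \<ge> p * (1/\<theta>2 - 1/\<theta>1) * (- ln p)"
    using powr_gap[OF p01 uw] .
  have e: "- p * ln p \<ge> mm" unfolding mm_def using ent_min[OF \<Delta>P_pos \<Delta>P_half p] .
  have d: "1/\<theta>2 - 1/\<theta>1 = (\<theta>1 - \<theta>2) / (\<theta>1 * \<theta>2)" using t1 t2 by (simp add: field_simps)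
  have prodle: "\<theta>1 * \<theta>2 \<le> (Max \<Theta>)\<^sup>2" using t1 t2 by (simp add: power2_eq_square mult_mono)
  have dd: "1/\<theta>2 - 1/\<theta>1 \<ge> (\<theta>1 - \<theta>2) / (Max \<Theta>)\<^sup>2"
    unfolding d using prodle t1 t2 assms(3) by (intro divide_left_mono) auto
  have "p * (1/\<theta>2 - 1/\<theta>1) * (- ln p) = (- p * ln p) * (1/\<theta>2 - 1/\<theta>1)" by simp
  also have "\<dots> \<ge> mm * ((\<theta>1 - \<theta>2) / (Max \<Theta>)\<^sup>2)"
    using e dd mm_pos assms(3) by (intro mult_mono) auto
  finally show ?thesis using g unfolding c0c_def by simp
qed

lemma gap:
  assumes "\<theta> \<in> \<Theta>" and p: "\<Delta>P \<le> p" "p \<le> 1 - \<Delta>P"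
  shows "\<bar>p powr (1/\<theta>) - p powr (1/\<theta>s)\<bar> \<ge> c0c * \<bar>\<theta> - \<theta>s\<bar>"
proof (cases "\<theta>s \<le> \<theta>")
  case True
  then show ?thesis using gap_aux[OF assms(1) \<theta>s_in True p] c0_pos by simp
next
  case False
  then show ?thesis using gap_aux[OF \<theta>s_in assms(1) _ p] c0_pos by simp
qed

lemma ln_ratio_bound:
  fixes x y c1 c2 :: real
  assumes "0 < c1" "c1 \<le> x" "x \<le> 1" "0 < c2" "c2 \<le> y" "y \<le> 1"
  shows "\<bar>ln (x / y)\<bar> \<le> - ln c1 - ln c2"
proof -
  have "ln (x/y) = ln x - ln y" using assms by (simp add: ln_div)
  moreover have "ln c1 \<le> ln x" "ln x \<le> 0" "ln c2 \<le> ln y" "ln y \<le> 0" using assms by auto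
  ultimately show ?thesis by linarith
qed

lemma q_bounds:
  assumes "\<theta> \<in> \<Theta>" and p: "\<Delta>P \<le> p" "p \<le> 1 - \<Delta>P"
  shows "\<Delta>P \<le> p powr (1/\<theta>)" "p powr (1/\<theta>) \<le> 1"
    "1 - (1 - \<Delta>P) powr (1/\<theta>) \<le> 1 - p powr (1/\<theta>)" "1 - p powr (1/\<theta>) \<le> 1"
    "0 < 1 - (1 - \<Delta>P) powr (1/\<theta>)"
proof -
  have t: "1 \<le> \<theta>" using assms \<Theta>_ge1 by auto
  have p01: "0 < p" "p < 1" using p \<Delta>P_pos \<Delta>P_half by auto
  have "p powr 1 \<le> p powr (1/\<theta>)" using t p01 by (intro powr_mono') auto
  then show "\<Delta>P \<le> p powr (1/\<theta>)" using p by simp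
  show "p powr (1/\<theta>) \<le> 1" using p01 t by (simp add: powr_le1)
  have "p powr (1/\<theta>) \<le> (1 - \<Delta>P) powr (1/\<theta>)" using p p01 t by (intro powr_mono2) auto
  then show "1 - (1 - \<Delta>P) powr (1/\<theta>) \<le> 1 - p powr (1/\<theta>)" by simp
  show "1 - p powr (1/\<theta>) \<le> 1" using p01 by simp
  have "(1 - \<Delta>P) powr (1/\<theta>) < 1 powr (1/\<theta>)" using t \<Delta>P_pos \<Delta>P_half
    by (intro powr_less_mono2) auto
  then show "0 < 1 - (1 - \<Delta>P) powr (1/\<theta>)" by simp
qed

lemma bdd1: assumes "\<theta> \<in> \<Theta>"
  shows "bdd_above ((\<lambda>p. \<bar>ln (p powr (1/\<theta>) / p powr (1/\<theta>s))\<bar>) ` {\<Delta>P..1 - \<Delta>P})"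
proof (rule bdd_aboveI2)
  fix p assume "p \<in> {\<Delta>P..1 - \<Delta>P}"
  then have p: "\<Delta>P \<le> p" "p \<le> 1 - \<Delta>P" by auto
  show "\<bar>ln (p powr (1/\<theta>) / p powr (1/\<theta>s))\<bar> \<le> - ln \<Delta>P - ln \<Delta>P"
    using q_bounds[OF assms p] q_bounds[OF \<theta>s_in p] \<Delta>P_pos
    by (intro ln_ratio_bound) auto
qed

lemma bdd2: assumes "\<theta> \<in> \<Theta>"
  shows "bdd_above ((\<lambda>p. \<bar>ln ((1 - p powr (1/\<theta>)) / (1 - p powr (1/\<theta>s)))\<bar>) ` {\<Delta>P..1 - \<Delta>P})"
proof (rule bdd_aboveI2)
  fix p assume "p \<in> {\<Delta>P..1 - \<Delta>P}"
  then have p: "\<Delta>P \<le> p" "p \<le> 1 - \<Delta>P" by auto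
  show "\<bar>ln ((1 - p powr (1/\<theta>)) / (1 - p powr (1/\<theta>s)))\<bar>
     \<le> - ln (1 - (1 - \<Delta>P) powr (1/\<theta>)) - ln (1 - (1 - \<Delta>P) powr (1/\<theta>s))"
    using q_bounds[OF assms p] q_bounds[OF \<theta>s_in p]
    by (intro ln_ratio_bound) auto
qed

lemma B_bounds:
  assumes "\<theta> \<in> \<Theta>" and p: "\<Delta>P \<le> p" "p \<le> 1 - \<Delta>P"
  shows "\<bar>ln (p powr (1/\<theta>) / p powr (1/\<theta>s))\<bar> \<le> Bc / 2"
    "\<bar>ln ((1 - p powr (1/\<theta>)) / (1 - p powr (1/\<theta>s)))\<bar> \<le> Bc / 2"
proof -
  have pi: "p \<in> {\<Delta>P..1 - \<Delta>P}" using p by simp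
  have "\<bar>ln (p powr (1/\<theta>) / p powr (1/\<theta>s))\<bar>
      \<le> (SUP p\<in>{\<Delta>P..1 - \<Delta>P}. \<bar>ln (p powr (1/\<theta>) / p powr (1/\<theta>s))\<bar>)"
    by (rule cSUP_upper[OF pi bdd1[OF assms(1)]])
  also have "\<dots> \<le> Max ((\<lambda>\<theta>. SUP p\<in>{\<Delta>P..1 - \<Delta>P}. \<bar>ln (p powr (1/\<theta>) / p powr (1/\<theta>s))\<bar>) ` \<Theta>)"
    using \<Theta>_fin assms(1) by (intro Max_ge) auto
  finally show "\<bar>ln (p powr (1/\<theta>) / p powr (1/\<theta>s))\<bar> \<le> Bc / 2" unfolding Bc_def by simp
  have "\<bar>ln ((1 - p powr (1/\<theta>)) / (1 - p powr (1/\<theta>s)))\<bar>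
      \<le> (SUP p\<in>{\<Delta>P..1 - \<Delta>P}. \<bar>ln ((1 - p powr (1/\<theta>)) / (1 - p powr (1/\<theta>s)))\<bar>)"
    by (rule cSUP_upper[OF pi bdd2[OF assms(1)]])
  also have "\<dots> \<le> Max ((\<lambda>\<theta>. SUP p\<in>{\<Delta>P..1 - \<Delta>P}. \<bar>ln ((1 - p powr (1/\<theta>)) / (1 - p powr (1/\<theta>s)))\<bar>) ` \<Theta>)"
    using \<Theta>_fin assms(1) by (intro Max_ge) auto
  finally show "\<bar>ln ((1 - p powr (1/\<theta>)) / (1 - p powr (1/\<theta>s)))\<bar> \<le> Bc / 2" unfolding Bc_def by simp
qed


lemma one_step:
  assumes a: "a \<in> S" and \<theta>: "\<theta> \<in> \<Theta>" and l: "0 \<le> l"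
  shows "(\<Sum>s\<in>S. trans_model P X a \<theta>s s * exp (l * (ln (trans_model P X a \<theta> s / trans_model P X a \<theta>s s)
            + 2 * c0c\<^sup>2 * (\<theta> - \<theta>s)\<^sup>2))) \<le> exp (l\<^sup>2 * Bc\<^sup>2 / 8)"
proof -
  define p where "p = P X a"
  define q where "q = p powr (1/\<theta>)"
  define qs where "qs = p powr (1/\<theta>s)"
  define D where "D = 2 * c0c\<^sup>2 * (\<theta> - \<theta>s)\<^sup>2"
  define y1 where "y1 = ln (q/qs)"
  define y2 where "y2 = ln ((1-q)/(1-qs))"
  have p: "\<Delta>P \<le> p" "p \<le> 1-\<Delta>P" using P_bounds[OF a] by (auto simp: p_def)
  have p01: "0 < p" "p < 1" using p \<Delta>P_pos \<Delta>P_half by auto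
  note qb = q_bounds[OF \<theta> p] and qsb = q_bounds[OF \<theta>s_in p]
  have q01: "0 < q" "q < 1" "0 < qs" "qs < 1"
    using qb qsb \<Delta>P_pos unfolding q_def qs_def by linarith+
  have tra: "trans_model P X a \<theta> a = q" "trans_model P X a \<theta>s a = qs"
    by (simp_all add: trans_model_def q_def qs_def p_def)
  have ro: "trans_model P X a \<theta> s / trans_model P X a \<theta>s s = (1-q)/(1-qs)"
    if "s \<in> S" "s \<noteq> a" for s
  proof -
    have "0 < P X s" using Pb that by auto
    define c where "c = P X s / (1 - p)"
    have c: "c \<noteq> 0" using \<open>0 < P X s\<close> p01 by (simp add: c_def)
    have "trans_model P X a \<theta> s = c * (1 - q)" "trans_model P X a \<theta>s s = c * (1 - qs)"
      using that unfolding trans_model_def q_def qs_def p_def c_def by simp_all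
    then show ?thesis using c by simp
  qed
  have rest: "(\<Sum>s\<in>S-{a}. trans_model P X a \<theta>s s) = 1 - qs"
    using trans_sum[OF a, of \<theta>s X] \<Theta>_pos[OF \<theta>s_in] sum.remove[OF S_fin a, of "trans_model P X a \<theta>s"] tra
    by simp
  have "(\<Sum>s\<in>S. trans_model P X a \<theta>s s * exp (l * (ln (trans_model P X a \<theta> s / trans_model P X a \<theta>s s) + D)))
      = qs * exp (l * (y1 + D)) + (\<Sum>s\<in>S-{a}. trans_model P X a \<theta>s s * exp (l * (y2 + D)))"
    apply (subst sum.remove[OF S_fin a])
    apply (rule arg_cong2[where f="(+)"])
     apply (simp add: tra y1_def)
    apply (rule sum.cong[OF refl])
    apply (simp add: ro y2_def)
    done
  also have "\<dots> = qs * exp (l * (y1 + D)) + (1 - qs) * exp (l * (y2 + D))"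
    by (simp add: sum_distrib_right[symmetric] rest)
  also have "\<dots> = exp (l * D) * (qs * exp (l * y1) + (1 - qs) * exp (l * y2))"
    by (simp add: distrib_left exp_add algebra_simps)
  also have "\<dots> \<le> exp (l * D) * exp (l * (qs * y1 + (1 - qs) * y2) + l\<^sup>2 * (y1 - y2)\<^sup>2 / 8)"
    using hoeff2[of qs l y1 y2] q01 l by (intro mult_left_mono) auto
  also have "\<dots> = exp (l * (D + (qs * y1 + (1 - qs) * y2)) + l\<^sup>2 * (y1 - y2)\<^sup>2 / 8)"
    by (simp add: exp_add[symmetric] algebra_simps)
  also have "\<dots> \<le> exp (l\<^sup>2 * Bc\<^sup>2 / 8)"
  proof -
    have pin: "qs * y1 + (1 - qs) * y2 \<le> -2 * (q - qs)\<^sup>2"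
      unfolding y1_def y2_def using pinsker_bern[of qs q] q01 by simp
    have g: "c0c * \<bar>\<theta> - \<theta>s\<bar> \<le> \<bar>q - qs\<bar>" using gap[OF \<theta> p] by (simp add: q_def qs_def)
    have "(c0c * \<bar>\<theta> - \<theta>s\<bar>)\<^sup>2 \<le> \<bar>q - qs\<bar>\<^sup>2"
      using g c0_pos by (intro power_mono) auto
    then have "c0c\<^sup>2 * (\<theta> - \<theta>s)\<^sup>2 \<le> (q - qs)\<^sup>2" by (simp add: power_mult_distrib)
    then have "D + (qs * y1 + (1 - qs) * y2) \<le> 0" using pin unfolding D_def by simp
    then have 1: "l * (D + (qs * y1 + (1 - qs) * y2)) \<le> 0" using l by (simp add: mult_nonneg_nonpos)
    have b1: "\<bar>y1\<bar> \<le> Bc/2" "\<bar>y2\<bar> \<le> Bc/2"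
      using B_bounds[OF \<theta> p] unfolding y1_def y2_def q_def qs_def by auto
    then have "\<bar>y1 - y2\<bar> \<le> Bc" by linarith
    then have "\<bar>y1 - y2\<bar>\<^sup>2 \<le> Bc\<^sup>2" by (intro power_mono) auto
    then have "(y1 - y2)\<^sup>2 \<le> Bc\<^sup>2" by simp
    then have 2: "l\<^sup>2 * (y1 - y2)\<^sup>2 / 8 \<le> l\<^sup>2 * Bc\<^sup>2 / 8"
      by (intro divide_right_mono mult_left_mono) auto
    show ?thesis using 1 2 by simp
  qed
  finally show ?thesis unfolding D_def .
qed


definition Y where "Y \<theta> tr = ln (likelihood P X0 tr \<theta> / likelihood P X0 tr \<theta>s)"
definition W where "W \<theta> l tr = exp (l * (Y \<theta> tr + 2 * c0c\<^sup>2 * (\<theta> - \<theta>s)\<^sup>2 * real (length tr)))"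

lemma Y_snoc:
  assumes tr: "set tr \<subseteq> St" and x: "x \<in> St" and \<theta>: "\<theta> \<in> \<Theta>"
  shows "Y \<theta> (tr @ [x]) = Y \<theta> tr + ln (trans_model P (hist X0 tr) (rec_of x) \<theta> (obs_of x)
             / trans_model P (hist X0 tr) (rec_of x) \<theta>s (obs_of x))"
proof -
  have m: "rec_of x \<in> S" "obs_of x \<in> S" using St_mem[OF x] by auto
  have L: "0 < likelihood P X0 tr \<theta>" "0 < likelihood P X0 tr \<theta>s"
    using lik_pos[OF tr] \<theta> \<theta>s_in by auto
  have a: "0 < trans_model P (hist X0 tr) (rec_of x) \<theta> (obs_of x)"
    "0 < trans_model P (hist X0 tr) (rec_of x) \<theta>s (obs_of x)"
    using trans_pos[OF m] \<Theta>_pos \<theta> \<theta>s_in by auto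
  show ?thesis unfolding Y_def lik_snoc using L a
    by (simp add: ln_div ln_mult)
qed

lemma W_nil: "W \<theta> l [] = 1"
  unfolding W_def Y_def by (simp add: lik_nil)

lemma W_step:
  assumes tr: "set tr \<subseteq> St" and \<theta>: "\<theta> \<in> \<Theta>" and l: "0 \<le> l"
  shows "(\<Sum>x\<in>St. F tr x * W \<theta> l (tr @ [x])) \<le> exp (l\<^sup>2 * Bc\<^sup>2 / 8) * W \<theta> l tr"
proof -
  define D where "D = 2 * c0c\<^sup>2 * (\<theta> - \<theta>s)\<^sup>2"
  define G where "G = (\<lambda>a s. exp (l * (ln (trans_model P (hist X0 tr) a \<theta> s
                / trans_model P (hist X0 tr) a \<theta>s s) + D)))"
  have "(\<Sum>x\<in>St. F tr x * W \<theta> l (tr @ [x])) = (\<Sum>x\<in>St. F tr x * (W \<theta> l tr * G (rec_of x) (obs_of x)))"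
  proof (rule sum.cong[OF refl])
    fix x assume x: "x \<in> St"
    have "W \<theta> l (tr @ [x]) = W \<theta> l tr * G (rec_of x) (obs_of x)"
      unfolding W_def G_def Y_snoc[OF tr x \<theta>] D_def
      by (simp add: exp_add[symmetric] algebra_simps)
    then show "F tr x * W \<theta> l (tr @ [x]) = F tr x * (W \<theta> l tr * G (rec_of x) (obs_of x))" by simp
  qed
  also have "\<dots> = W \<theta> l tr * (\<Sum>x\<in>St. F tr x * G (rec_of x) (obs_of x))"
    by (simp add: sum_distrib_left algebra_simps)
  also have "\<dots> = W \<theta> l tr * (\<Sum>a\<in>S. \<pi> tr a * (\<Sum>s\<in>S. trans_model P (hist X0 tr) a \<theta>s s * G a s))"
    by (simp add: F_split[OF tr])
  also have "\<dots> \<le> W \<theta> l tr * (\<Sum>a\<in>S. \<pi> tr a * exp (l\<^sup>2 * Bc\<^sup>2 / 8))"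
    unfolding G_def D_def
    by (intro mult_left_mono sum_mono one_step \<theta> l \<pi>_nonneg) (auto simp: W_def)
  also have "\<dots> = exp (l\<^sup>2 * Bc\<^sup>2 / 8) * W \<theta> l tr"
    by (simp add: sum_distrib_right[symmetric] \<pi>_distr)
  finally show ?thesis .
qed

lemma E_W:
  assumes \<theta>: "\<theta> \<in> \<Theta>" and l: "0 \<le> l"
  shows "E n (W \<theta> l) \<le> exp (l\<^sup>2 * Bc\<^sup>2 / 8) ^ n"
proof -
  have "E n (W \<theta> l) \<le> exp (l\<^sup>2 * Bc\<^sup>2 / 8) ^ n * W \<theta> l []"
  proof (rule supermart)
    show "0 \<le> exp (l\<^sup>2 * Bc\<^sup>2 / 8)" by simp
    show "0 \<le> W \<theta> l tr" for tr by (simp add: W_def)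
    show "(\<Sum>x\<in>St. F tr x * W \<theta> l (tr @ [x])) \<le> exp (l\<^sup>2 * Bc\<^sup>2 / 8) * W \<theta> l tr"
      if "set tr \<subseteq> St" for tr using W_step[OF that \<theta> l] .
  qed
  then show ?thesis by (simp add: W_nil)
qed

definition h where "h tr = (\<Sum>\<theta>\<in>\<Theta>. posterior P P0 \<Theta> X0 tr \<theta> * (\<theta> - \<theta>s)\<^sup>2)"

lemma LHS_eq: "expected_sq_err S P P0 \<Theta> X0 \<pi> \<theta>s (Suc m) = E (Suc m) h"
proof -
  have "expected_sq_err S P P0 \<Theta> X0 \<pi> \<theta>s (Suc m) = E (Suc m) (\<lambda>tr. (smp_of (last tr) - \<theta>s)\<^sup>2)"
    unfolding expected_sq_err_def E_def T_def St_def by simp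
  also have "\<dots> = E (Suc m) h"
    unfolding E_Suc
  proof (rule sum.cong[OF refl])
    fix tr assume "tr \<in> T m"
    then have tr: "set tr \<subseteq> St" by (simp add: T_def)
    have inner: "(\<Sum>\<theta>'\<in>\<Theta>. F tr (a,s,\<theta>') * (smp_of (last (tr @ [(a,s,\<theta>')])) - \<theta>s)\<^sup>2)
        = (\<Sum>\<theta>'\<in>\<Theta>. F tr (a,s,\<theta>') * h (tr @ [(a,s,\<theta>')]))" if as: "a \<in> S" "s \<in> S" for a s
    proof -
      define Q where "Q = posterior P P0 \<Theta> X0 (tr @ [(a,s,\<theta>s)])"
      define H where "H = h (tr @ [(a,s,\<theta>s)])"
      define c where "c = \<pi> tr a * trans_model P (hist X0 tr) a \<theta>s s"
      have Fe: "F tr (a,s,\<theta>') = c * Q \<theta>'" for \<theta>'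
        unfolding F_def c_def Q_def rec_of_def obs_of_def smp_of_def
        by (subst post_indep[where v=\<theta>s]) simp
      have He: "h (tr @ [(a,s,\<theta>')]) = H" for \<theta>'
        unfolding h_def H_def by (rule sum.cong[OF refl], subst post_indep[where v=\<theta>s]) simp
      have Qs: "(\<Sum>\<theta>'\<in>\<Theta>. Q \<theta>') = 1" unfolding Q_def
        using tr as \<theta>s_in by (intro post_sum) (auto simp: St_def)
      have "(\<Sum>\<theta>'\<in>\<Theta>. F tr (a,s,\<theta>') * (smp_of (last (tr @ [(a,s,\<theta>')])) - \<theta>s)\<^sup>2) = c * H"
        unfolding Fe H_def h_def Q_def by (simp add: smp_of_def sum_distrib_left mult.assoc)
      moreover have "(\<Sum>\<theta>'\<in>\<Theta>. F tr (a,s,\<theta>') * h (tr @ [(a,s,\<theta>')])) = c * H"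
        unfolding Fe He using Qs by (simp add: sum_distrib_left[symmetric] sum_distrib_right[symmetric] mult.assoc mult.commute[of _ H])
      ultimately show ?thesis by simp
    qed
    show "traj_prob P P0 \<Theta> X0 \<pi> \<theta>s tr * (\<Sum>x\<in>St. F tr x * (smp_of (last (tr @ [x])) - \<theta>s)\<^sup>2)
        = traj_prob P P0 \<Theta> X0 \<pi> \<theta>s tr * (\<Sum>x\<in>St. F tr x * h (tr @ [x]))"
      unfolding sum_St using inner by simp
  qed
  finally show ?thesis .
qed


lemma d_le_kappa: assumes "\<theta> \<in> \<Theta>" shows "(\<theta> - \<theta>s)\<^sup>2 \<le> (Max \<Theta> - Min \<Theta>)\<^sup>2"
proof -
  have "\<bar>\<theta> - \<theta>s\<bar> \<le> Max \<Theta> - Min \<Theta>"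
    using Max_ge'[OF assms] Min_le'[OF assms] Max_ge'[OF \<theta>s_in] Min_le'[OF \<theta>s_in] by linarith
  then have "\<bar>\<theta> - \<theta>s\<bar>\<^sup>2 \<le> (Max \<Theta> - Min \<Theta>)\<^sup>2" by (intro power_mono) auto
  then show ?thesis by simp
qed

lemma h_le_kappa: assumes tr: "set tr \<subseteq> St" shows "h tr \<le> (Max \<Theta> - Min \<Theta>)\<^sup>2"
proof -
  have "h tr \<le> (\<Sum>\<theta>\<in>\<Theta>. posterior P P0 \<Theta> X0 tr \<theta> * (Max \<Theta> - Min \<Theta>)\<^sup>2)"
    unfolding h_def by (intro sum_mono mult_left_mono d_le_kappa post_nonneg tr)
  also have "\<dots> = (Max \<Theta> - Min \<Theta>)\<^sup>2" by (simp add: sum_distrib_right[symmetric] post_sum[OF tr])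
  finally show ?thesis .
qed

lemma h_le_Phi: assumes tr: "set tr \<subseteq> St"
  shows "h tr \<le> (\<Sum>\<theta>\<in>\<Theta>-{\<theta>s}. (\<theta> - \<theta>s)\<^sup>2 * min 1 (P0 \<theta> / P0 \<theta>s * exp (Y \<theta> tr)))"
proof -
  have "h tr = (\<Sum>\<theta>\<in>\<Theta>-{\<theta>s}. posterior P P0 \<Theta> X0 tr \<theta> * (\<theta> - \<theta>s)\<^sup>2)"
    unfolding h_def using sum.remove[OF \<Theta>_fin \<theta>s_in, of "\<lambda>\<theta>. posterior P P0 \<Theta> X0 tr \<theta> * (\<theta> - \<theta>s)\<^sup>2"]
    by simp
  also have "\<dots> \<le> (\<Sum>\<theta>\<in>\<Theta>-{\<theta>s}. (\<theta> - \<theta>s)\<^sup>2 * min 1 (P0 \<theta> / P0 \<theta>s * exp (Y \<theta> tr)))"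
  proof (rule sum_mono)
    fix \<theta> assume th: "\<theta> \<in> \<Theta> - {\<theta>s}"
    then have \<theta>: "\<theta> \<in> \<Theta>" by simp
    define Z where "Z = (\<Sum>\<theta>'\<in>\<Theta>. P0 \<theta>' * likelihood P X0 tr \<theta>')"
    have Zp: "0 < Z" using Z_pos[OF tr] by (simp add: Z_def)
    have L: "0 < likelihood P X0 tr \<theta>" "0 < likelihood P X0 tr \<theta>s"
      using lik_pos[OF tr] \<theta> \<theta>s_in by auto
    have P0p: "0 < P0 \<theta>" "0 < P0 \<theta>s" using P0_pos \<theta> \<theta>s_in by auto
    have Zge: "P0 \<theta>s * likelihood P X0 tr \<theta>s \<le> Z" unfolding Z_def
      using \<theta>s_in \<Theta>_fin P0_pos lik_pos[OF tr]
      by (intro member_le_sum) (auto intro!: mult_nonneg_nonneg less_imp_le)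
    have p1: "posterior P P0 \<Theta> X0 tr \<theta> \<le> 1"
    proof -
      have "posterior P P0 \<Theta> X0 tr \<theta> \<le> (\<Sum>\<theta>'\<in>\<Theta>. posterior P P0 \<Theta> X0 tr \<theta>')"
        using \<theta> \<Theta>_fin post_nonneg[OF tr] by (intro member_le_sum) auto
      then show ?thesis using post_sum[OF tr] by simp
    qed
    have "posterior P P0 \<Theta> X0 tr \<theta> = P0 \<theta> * likelihood P X0 tr \<theta> / Z"
      unfolding posterior_def Z_def ..
    also have "\<dots> \<le> P0 \<theta> * likelihood P X0 tr \<theta> / (P0 \<theta>s * likelihood P X0 tr \<theta>s)"
      using Zge P0p L Zp by (intro divide_left_mono) auto
    also have "\<dots> = P0 \<theta> / P0 \<theta>s * exp (Y \<theta> tr)"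
      unfolding Y_def using L by simp
    finally have p2: "posterior P P0 \<Theta> X0 tr \<theta> \<le> P0 \<theta> / P0 \<theta>s * exp (Y \<theta> tr)" .
    have pm: "posterior P P0 \<Theta> X0 tr \<theta> \<le> min 1 (P0 \<theta> / P0 \<theta>s * exp (Y \<theta> tr))"
      using p1 p2 by simp
    show "posterior P P0 \<Theta> X0 tr \<theta> * (\<theta> - \<theta>s)\<^sup>2 \<le> (\<theta> - \<theta>s)\<^sup>2 * min 1 (P0 \<theta> / P0 \<theta>s * exp (Y \<theta> tr))"
      using mult_left_mono[OF pm, of "(\<theta> - \<theta>s)\<^sup>2"] by (simp add: mult.commute)
  qed
  finally show ?thesis .
qed

lemma Phi_pt:
  fixes r l y A :: real
  assumes "0 \<le> r" "0 \<le> l"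
  shows "min 1 (r * exp y) \<le> r * exp A + exp (l * (y - A))"
proof (cases "y \<le> A")
  case True
  then have "r * exp y \<le> r * exp A" using assms by (intro mult_left_mono) auto
  then show ?thesis by (smt (verit) exp_gt_zero)
next
  case False
  then have "1 \<le> exp (l * (y - A))" using assms by simp
  moreover have "0 \<le> r * exp A" using assms by simp
  ultimately show ?thesis by linarith
qed

lemma E_Phi:
  assumes \<theta>: "\<theta> \<in> \<Theta>" and l: "0 \<le> l" and r: "0 \<le> r"
  shows "E n (\<lambda>tr. min 1 (r * exp (Y \<theta> tr)))
     \<le> r * exp (- (2 * c0c\<^sup>2 * (\<theta> - \<theta>s)\<^sup>2) * real n + \<epsilon>) + exp (- l * \<epsilon>) * exp (l\<^sup>2 * Bc\<^sup>2 / 8) ^ n"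
proof -
  define D where "D = 2 * c0c\<^sup>2 * (\<theta> - \<theta>s)\<^sup>2"
  have "E n (\<lambda>tr. min 1 (r * exp (Y \<theta> tr)))
     \<le> E n (\<lambda>tr. r * exp (- D * real n + \<epsilon>) + exp (- l * \<epsilon>) * W \<theta> l tr)"
  proof (rule E_mono)
    fix tr assume "tr \<in> T n"
    then have len: "length tr = n" by (simp add: T_def)
    have "min 1 (r * exp (Y \<theta> tr)) \<le> r * exp (- D * real n + \<epsilon>) + exp (l * (Y \<theta> tr - (- D * real n + \<epsilon>)))"
      by (rule Phi_pt[OF r l])
    also have "exp (l * (Y \<theta> tr - (- D * real n + \<epsilon>))) = exp (- l * \<epsilon>) * W \<theta> l tr"
      unfolding W_def D_def len by (simp add: exp_add[symmetric] algebra_simps)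
    finally show "min 1 (r * exp (Y \<theta> tr)) \<le> r * exp (- D * real n + \<epsilon>) + exp (- l * \<epsilon>) * W \<theta> l tr" .
  qed
  also have "\<dots> = E n (\<lambda>_. r * exp (- D * real n + \<epsilon>)) + exp (- l * \<epsilon>) * E n (W \<theta> l)"
    by (simp add: E_add E_cmult)
  also have "\<dots> \<le> r * exp (- D * real n + \<epsilon>) + exp (- l * \<epsilon>) * exp (l\<^sup>2 * Bc\<^sup>2 / 8) ^ n"
    using E_const[of "r * exp (- D * real n + \<epsilon>)" n] E_W[OF \<theta> l, of n] r
    by (intro add_mono mult_left_mono) auto
  finally show ?thesis unfolding D_def .
qed


lemma xexp:
  fixes c t d :: real
  assumes "0 < c" "0 < t"
  shows "d\<^sup>2 * exp (- (c * d\<^sup>2 * t)) \<le> 1 / (exp 1 * c * t)"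
proof -
  define x where "x = c * d\<^sup>2 * t"
  have "1 + (x - 1) \<le> exp (x - 1)" by (rule exp_ge_add_one_self)
  then have "x * exp 1 \<le> exp x" by (simp add: exp_diff field_simps)
  then have "x * exp (- x) \<le> 1 / exp 1" by (simp add: exp_minus field_simps)
  moreover have "d\<^sup>2 * exp (- x) = x * exp (- x) / (c * t)" using assms by (simp add: x_def field_simps)
  ultimately have "d\<^sup>2 * exp (- x) \<le> (1 / exp 1) / (c * t)" using assms
    by (metis divide_right_mono less_eq_real_def mult_pos_pos)
  then show ?thesis by (simp add: x_def)
qed

lemma Bc_pos: assumes "\<theta>0 \<in> \<Theta>" "\<theta>0 \<noteq> \<theta>s" shows "0 < Bc"
proof -
  have b: "\<bar>ln (\<Delta>P powr (1/\<theta>0) / \<Delta>P powr (1/\<theta>s))\<bar> \<le> Bc / 2"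
    using B_bounds(1)[OF assms(1), of \<Delta>P] \<Delta>P_half by simp
  have "ln (\<Delta>P powr (1/\<theta>0) / \<Delta>P powr (1/\<theta>s)) = (1/\<theta>0 - 1/\<theta>s) * ln \<Delta>P"
    using \<Delta>P_pos by (simp add: ln_div algebra_simps)
  moreover have "1/\<theta>0 - 1/\<theta>s \<noteq> 0" using assms \<Theta>_pos[OF assms(1)] \<Theta>_pos[OF \<theta>s_in] by auto
  moreover have "ln \<Delta>P \<noteq> 0" using \<Delta>P_pos \<Delta>P_half by simp
  ultimately have "0 < \<bar>ln (\<Delta>P powr (1/\<theta>0) / \<Delta>P powr (1/\<theta>s))\<bar>" by simp
  then show ?thesis using b by simp
qed

lemma final:
  assumes t: "t > 2"
  shows "expected_sq_err S P P0 \<Theta> X0 \<pi> \<theta>s t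
           \<le> 3 / (exp 1 * c0c\<^sup>2 * real t) * ((1 - P0 \<theta>s) / P0 \<theta>s)
               * exp (- c0c\<^sup>2 * (Min ((\<lambda>\<theta>. \<bar>\<theta> - \<theta>s\<bar>) ` (\<Theta> - {\<theta>s})))\<^sup>2 * real t
                 + sqrt (2 * Bc\<^sup>2 * real t * ln (real (card \<Theta>) * (Max \<Theta> - Min \<Theta>)\<^sup>2 * (real t)\<^sup>2)))
             + 1 / (real t)\<^sup>2"
proof -
  define K where "K = real (card \<Theta>)"
  define \<kappa> where "\<kappa> = (Max \<Theta> - Min \<Theta>)\<^sup>2"
  define \<Delta>\<theta> where "\<Delta>\<theta> = Min ((\<lambda>\<theta>. \<bar>\<theta> - \<theta>s\<bar>) ` (\<Theta> - {\<theta>s}))"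
  define \<epsilon> where "\<epsilon> = sqrt (2 * Bc\<^sup>2 * real t * ln (K * \<kappa> * (real t)\<^sup>2))"
  define R1 where "R1 = 3 / (exp 1 * c0c\<^sup>2 * real t) * ((1 - P0 \<theta>s) / P0 \<theta>s)
               * exp (- c0c\<^sup>2 * \<Delta>\<theta>\<^sup>2 * real t + \<epsilon>)"
  obtain m where tm: "t = Suc m" using t by (cases t) auto
  have LHS: "expected_sq_err S P P0 \<Theta> X0 \<pi> \<theta>s t = E t h" using LHS_eq tm by simp
  have tpos: "0 < real t" using t by simp
  have "0 < card \<Theta>" using card_gt_0_iff \<Theta>_fin \<theta>s_in by blast
  then have K1: "1 \<le> K" unfolding K_def by linarith
  have P0s: "0 < P0 \<theta>s" using P0_pos \<theta>s_in by simp
  have P0s1: "P0 \<theta>s \<le> 1" using P0_sum member_le_sum[OF \<theta>s_in, of P0] \<Theta>_fin P0_pos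
    by (simp add: less_imp_le)
  have R1nn: "0 \<le> R1" unfolding R1_def using P0s P0s1 tpos by simp
  have \<kappa>nn: "0 \<le> \<kappa>" by (simp add: \<kappa>_def)
  have "E t h \<le> R1 + 1 / (real t)\<^sup>2"
  proof (cases "K * \<kappa> * (real t)\<^sup>2 < 1")
    case True
    have "E t h \<le> E t (\<lambda>_. \<kappa>)" by (rule E_mono) (simp add: h_le_kappa T_def \<kappa>_def)
    also have "\<dots> \<le> \<kappa>" by (rule E_const[OF \<kappa>nn])
    also have "\<dots> \<le> 1 / (real t)\<^sup>2"
    proof -
      have "\<kappa> * (real t)\<^sup>2 \<le> K * \<kappa> * (real t)\<^sup>2" using K1 \<kappa>nn
        by (intro mult_right_mono) (auto simp: mult_le_cancel_right1)
      then have "\<kappa> * (real t)\<^sup>2 \<le> 1" using True by simp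
      then show ?thesis using tpos by (simp add: field_simps)
    qed
    finally show ?thesis using R1nn by simp
  next
    case False
    then have KL: "1 \<le> K * \<kappa> * (real t)\<^sup>2" by simp
    have \<kappa>pos: "0 < \<kappa>" using KL \<kappa>nn by (cases "\<kappa> = 0") auto
    have ne: "\<Theta> - {\<theta>s} \<noteq> {}"
    proof
      assume "\<Theta> - {\<theta>s} = {}"
      then have "\<Theta> = {\<theta>s}" using \<theta>s_in by auto
      then show False using \<kappa>pos by (simp add: \<kappa>_def)
    qed
    then obtain \<theta>0 where \<theta>0: "\<theta>0 \<in> \<Theta>" "\<theta>0 \<noteq> \<theta>s" by auto
    have Bp: "0 < Bc" by (rule Bc_pos[OF \<theta>0])
    define L where "L = ln (K * \<kappa> * (real t)\<^sup>2)"
    have L0: "0 \<le> L" using KL by (simp add: L_def)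
    define l where "l = 4 * \<epsilon> / (real t * Bc\<^sup>2)"
    have eps_def': "\<epsilon> = sqrt (2 * Bc\<^sup>2 * real t * L)" by (simp add: \<epsilon>_def L_def)
    have eps0: "0 \<le> \<epsilon>" using L0 tpos by (simp add: eps_def')
    have eps2: "\<epsilon>\<^sup>2 = 2 * Bc\<^sup>2 * real t * L" using L0 tpos by (simp add: eps_def')
    have l0: "0 \<le> l" using eps0 tpos by (simp add: l_def)
    have le: "l * \<epsilon> = 8 * L"
    proof -
      have "l * \<epsilon> = 4 * \<epsilon>\<^sup>2 / (real t * Bc\<^sup>2)" by (simp add: l_def power2_eq_square)
      also have "\<dots> = 8 * L" using tpos Bp by (simp add: eps2 field_simps)
      finally show ?thesis .
    qed
    have ll: "real t * (l\<^sup>2 * Bc\<^sup>2 / 8) = 4 * L"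
    proof -
      have "real t * (l\<^sup>2 * Bc\<^sup>2 / 8) = 2 * \<epsilon>\<^sup>2 / (real t * Bc\<^sup>2)"
        using tpos Bp by (simp add: l_def power2_eq_square field_simps)
      also have "\<dots> = 4 * L" using tpos Bp by (simp add: eps2 field_simps)
      finally show ?thesis .
    qed
    have bad: "exp (- l * \<epsilon>) * exp (l\<^sup>2 * Bc\<^sup>2 / 8) ^ t \<le> 1 / (K * \<kappa> * (real t)\<^sup>2)"
    proof -
      have "exp (- l * \<epsilon>) * exp (l\<^sup>2 * Bc\<^sup>2 / 8) ^ t = exp (- l * \<epsilon> + real t * (l\<^sup>2 * Bc\<^sup>2 / 8))"
        by (simp only: exp_of_nat_mult[symmetric] exp_add[symmetric])
      also have "\<dots> = exp (- 4 * L)" using le ll by simp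
      also have "\<dots> \<le> exp (- L)" using L0 by simp
      also have "\<dots> = 1 / (K * \<kappa> * (real t)\<^sup>2)" using KL by (simp add: L_def exp_minus inverse_eq_divide)
      finally show ?thesis .
    qed
    have dmin: "\<Delta>\<theta>\<^sup>2 \<le> (\<theta> - \<theta>s)\<^sup>2" if "\<theta> \<in> \<Theta> - {\<theta>s}" for \<theta>
    proof -
      have "\<Delta>\<theta> \<le> \<bar>\<theta> - \<theta>s\<bar>" unfolding \<Delta>\<theta>_def using that \<Theta>_fin by (intro Min_le) auto
      moreover have "0 \<le> \<Delta>\<theta>" unfolding \<Delta>\<theta>_def using ne \<Theta>_fin by (subst Min_ge_iff) auto
      ultimately have "\<Delta>\<theta>\<^sup>2 \<le> \<bar>\<theta> - \<theta>s\<bar>\<^sup>2" by (intro power_mono) auto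
      then show ?thesis by simp
    qed
    define C where "C = 1 / (exp 1 * c0c\<^sup>2 * real t) * exp (- c0c\<^sup>2 * \<Delta>\<theta>\<^sup>2 * real t) * exp \<epsilon>"
    have "E t h \<le> E t (\<lambda>tr. \<Sum>\<theta>\<in>\<Theta>-{\<theta>s}. (\<theta> - \<theta>s)\<^sup>2 * min 1 (P0 \<theta> / P0 \<theta>s * exp (Y \<theta> tr)))"
      by (rule E_mono, rule h_le_Phi) (simp add: T_def)
    also have "\<dots> = (\<Sum>\<theta>\<in>\<Theta>-{\<theta>s}. (\<theta> - \<theta>s)\<^sup>2 * E t (\<lambda>tr. min 1 (P0 \<theta> / P0 \<theta>s * exp (Y \<theta> tr))))"
      by (simp add: E_sum E_cmult)
    also have "\<dots> \<le> (\<Sum>\<theta>\<in>\<Theta>-{\<theta>s}. P0 \<theta> / P0 \<theta>s * C + \<kappa> * (1 / (K * \<kappa> * (real t)\<^sup>2)))"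
    proof (rule sum_mono)
      fix \<theta> assume th: "\<theta> \<in> \<Theta> - {\<theta>s}"
      then have \<theta>: "\<theta> \<in> \<Theta>" by simp
      define r where "r = P0 \<theta> / P0 \<theta>s"
      have r0: "0 \<le> r" using P0_pos[OF \<theta>] P0s by (simp add: r_def)
      have "(\<theta> - \<theta>s)\<^sup>2 * E t (\<lambda>tr. min 1 (r * exp (Y \<theta> tr)))
         \<le> (\<theta> - \<theta>s)\<^sup>2 * (r * exp (- (2 * c0c\<^sup>2 * (\<theta> - \<theta>s)\<^sup>2) * real t + \<epsilon>)
              + exp (- l * \<epsilon>) * exp (l\<^sup>2 * Bc\<^sup>2 / 8) ^ t)"
        by (intro mult_left_mono E_Phi \<theta> l0 r0) simp
      also have "\<dots> = r * ((\<theta> - \<theta>s)\<^sup>2 * exp (- (c0c\<^sup>2 * (\<theta> - \<theta>s)\<^sup>2 * real t)))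
              * exp (- (c0c\<^sup>2 * (\<theta> - \<theta>s)\<^sup>2 * real t)) * exp \<epsilon>
            + (\<theta> - \<theta>s)\<^sup>2 * (exp (- l * \<epsilon>) * exp (l\<^sup>2 * Bc\<^sup>2 / 8) ^ t)"
        by (simp add: algebra_simps flip: exp_add)
      also have "\<dots> \<le> r * (1 / (exp 1 * c0c\<^sup>2 * real t))
              * exp (- c0c\<^sup>2 * \<Delta>\<theta>\<^sup>2 * real t) * exp \<epsilon>
            + \<kappa> * (1 / (K * \<kappa> * (real t)\<^sup>2))"
      proof (intro add_mono mult_mono mult_left_mono)
        show "(\<theta> - \<theta>s)\<^sup>2 * exp (- (c0c\<^sup>2 * (\<theta> - \<theta>s)\<^sup>2 * real t)) \<le> 1 / (exp 1 * c0c\<^sup>2 * real t)"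
          using xexp[of "c0c\<^sup>2" "real t" "\<theta> - \<theta>s"] c0_pos tpos by simp
        have "c0c\<^sup>2 * \<Delta>\<theta>\<^sup>2 * real t \<le> c0c\<^sup>2 * (\<theta> - \<theta>s)\<^sup>2 * real t"
          using dmin[OF th] tpos by (intro mult_right_mono mult_left_mono) auto
        then show "exp (- (c0c\<^sup>2 * (\<theta> - \<theta>s)\<^sup>2 * real t)) \<le> exp (- c0c\<^sup>2 * \<Delta>\<theta>\<^sup>2 * real t)"
          by simp
        show "(\<theta> - \<theta>s)\<^sup>2 \<le> \<kappa>" unfolding \<kappa>_def by (rule d_le_kappa[OF \<theta>])
      qed (use r0 bad tpos c0_pos \<kappa>nn in auto)
      finally show "(\<theta> - \<theta>s)\<^sup>2 * E t (\<lambda>tr. min 1 (P0 \<theta> / P0 \<theta>s * exp (Y \<theta> tr)))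
          \<le> P0 \<theta> / P0 \<theta>s * C + \<kappa> * (1 / (K * \<kappa> * (real t)\<^sup>2))"
        unfolding r_def C_def by (simp add: mult.assoc)
    qed
    also have "\<dots> = (\<Sum>\<theta>\<in>\<Theta>-{\<theta>s}. P0 \<theta>) / P0 \<theta>s * C + real (card (\<Theta>-{\<theta>s})) * (1 / (K * (real t)\<^sup>2))"
      using \<kappa>pos by (simp add: sum.distrib sum_divide_distrib[symmetric] sum_distrib_right[symmetric])
    also have "\<dots> \<le> R1 + 1 / (real t)\<^sup>2"
    proof (rule add_mono)
      have s: "(\<Sum>\<theta>\<in>\<Theta>-{\<theta>s}. P0 \<theta>) = 1 - P0 \<theta>s"
        using sum.remove[OF \<Theta>_fin \<theta>s_in, of P0] P0_sum by simp
      have C0: "0 \<le> C" unfolding C_def using tpos by simp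
      have "C = 1 / (exp 1 * c0c\<^sup>2 * real t) * exp (- c0c\<^sup>2 * \<Delta>\<theta>\<^sup>2 * real t + \<epsilon>)"
        unfolding C_def by (simp only: exp_add mult.assoc)
      also have "\<dots> \<le> 3 / (exp 1 * c0c\<^sup>2 * real t) * exp (- c0c\<^sup>2 * \<Delta>\<theta>\<^sup>2 * real t + \<epsilon>)"
        using tpos c0_pos by (intro mult_right_mono divide_right_mono) auto
      finally have "C \<le> 3 / (exp 1 * c0c\<^sup>2 * real t) * exp (- c0c\<^sup>2 * \<Delta>\<theta>\<^sup>2 * real t + \<epsilon>)" .
      then have "(1 - P0 \<theta>s) / P0 \<theta>s * C \<le> (1 - P0 \<theta>s) / P0 \<theta>s *
           (3 / (exp 1 * c0c\<^sup>2 * real t) * exp (- c0c\<^sup>2 * \<Delta>\<theta>\<^sup>2 * real t + \<epsilon>))"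
        using P0s P0s1 by (intro mult_left_mono) auto
      also have "\<dots> = R1" unfolding R1_def by (simp only: ac_simps)
      finally show "(\<Sum>\<theta>\<in>\<Theta>-{\<theta>s}. P0 \<theta>) / P0 \<theta>s * C \<le> R1"
        unfolding s .
      have "real (card (\<Theta>-{\<theta>s})) \<le> K" unfolding K_def using \<Theta>_fin
        by (simp add: card_Diff_subset_Int)
      then have "real (card (\<Theta>-{\<theta>s})) * (1 / (K * (real t)\<^sup>2)) \<le> K * (1 / (K * (real t)\<^sup>2))"
        using tpos K1 by (intro mult_right_mono) auto
      also have "\<dots> = 1 / (real t)\<^sup>2" using K1 by simp
      finally show "real (card (\<Theta>-{\<theta>s})) * (1 / (K * (real t)\<^sup>2)) \<le> 1 / (real t)\<^sup>2" .
    qed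
    finally show ?thesis .
  qed
  then show ?thesis
    unfolding LHS R1_def \<epsilon>_def K_def \<kappa>_def \<Delta>\<theta>_def .
qed

end

theorem lemma6:
  fixes S :: "'s set" and P :: "'s list \<Rightarrow> 's \<Rightarrow> real" and \<Delta>P :: real
    and \<Theta> :: "real set" and P0 :: "real \<Rightarrow> real" and \<theta>s :: real
    and X0 :: "'s list" and \<pi> :: "'s step list \<Rightarrow> 's \<Rightarrow> real" and t :: nat
  assumes S_fin: "finite S"
    and P_distr: "\<And>X. (\<Sum>s\<in>S. P X s) = 1"
    and P_bounds: "\<And>X s. s \<in> S \<Longrightarrow> \<Delta>P \<le> P X s \<and> P X s \<le> 1 - \<Delta>P"
    and \<Delta>P_range: "0 < \<Delta>P" "\<Delta>P < 1/2"
    and \<Theta>_fin: "finite \<Theta>"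
    and \<Theta>_ge1: "\<And>\<theta>. \<theta> \<in> \<Theta> \<Longrightarrow> 1 \<le> \<theta>"
    and P0_pos: "\<And>\<theta>. \<theta> \<in> \<Theta> \<Longrightarrow> 0 < P0 \<theta>"
    and P0_sum: "(\<Sum>\<theta>\<in>\<Theta>. P0 \<theta>) = 1"
    and \<theta>s_in: "\<theta>s \<in> \<Theta>"
    and \<pi>_nonneg: "\<And>tr a. 0 \<le> \<pi> tr a"
    and \<pi>_distr: "\<And>tr. (\<Sum>a\<in>S. \<pi> tr a) = 1"
    and t_gt: "t > 2"
  defines "K \<equiv> real (card \<Theta>)"
    and "\<Delta>\<theta> \<equiv> Min ((\<lambda>\<theta>. \<bar>\<theta> - \<theta>s\<bar>) ` (\<Theta> - {\<theta>s}))"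
    and "B \<equiv> 2 * max
          (Max ((\<lambda>\<theta>. SUP p\<in>{\<Delta>P..1 - \<Delta>P}. \<bar>ln (p powr (1/\<theta>) / p powr (1/\<theta>s))\<bar>) ` \<Theta>))
          (Max ((\<lambda>\<theta>. SUP p\<in>{\<Delta>P..1 - \<Delta>P}.
                   \<bar>ln ((1 - p powr (1/\<theta>)) / (1 - p powr (1/\<theta>s)))\<bar>) ` \<Theta>))"
    and "c0 \<equiv> min (ln (1/\<Delta>P) * \<Delta>P) (ln (1/(1 - \<Delta>P)) * (1 - \<Delta>P)) / (Max \<Theta>)\<^sup>2"
    and "\<kappa> \<equiv> (Max \<Theta> - Min \<Theta>)\<^sup>2"
  shows "expected_sq_err S P P0 \<Theta> X0 \<pi> \<theta>s t
           \<le> 3 / (exp 1 * c0\<^sup>2 * real t) * ((1 - P0 \<theta>s) / P0 \<theta>s)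
               * exp (- c0\<^sup>2 * \<Delta>\<theta>\<^sup>2 * real t + sqrt (2 * B\<^sup>2 * real t * ln (K * \<kappa> * (real t)\<^sup>2)))
             + 1 / (real t)\<^sup>2"
  proof -
  interpret LS S P \<Delta>P \<Theta> P0 \<theta>s X0 \<pi>
  proof
    show "finite S" by fact
    show "(\<Sum>s\<in>S. P X s) = 1" for X by (rule P_distr)
    show "\<Delta>P \<le> P X s \<and> P X s \<le> 1 - \<Delta>P" if "s \<in> S" for X s using P_bounds that .
    show "0 < \<Delta>P" "\<Delta>P < 1/2" by (rule \<Delta>P_range(1), rule \<Delta>P_range(2))
    show "finite \<Theta>" by fact
    show "1 \<le> \<theta>" if "\<theta> \<in> \<Theta>" for \<theta> using \<Theta>_ge1 that .
    show "0 < P0 \<theta>" if "\<theta> \<in> \<Theta>" for \<theta> using P0_pos that .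
    show "(\<Sum>\<theta>\<in>\<Theta>. P0 \<theta>) = 1" by fact
    show "\<theta>s \<in> \<Theta>" by fact
    show "0 \<le> \<pi> tr a" for tr a by (rule \<pi>_nonneg)
    show "(\<Sum>a\<in>S. \<pi> tr a) = 1" for tr by (rule \<pi>_distr)
  qed
  have c0e: "c0 = c0c" unfolding c0_def c0c_def mm_def ..
  have Be: "B = Bc" unfolding B_def Bc_def ..
  show ?thesis unfolding K_def \<Delta>\<theta>_def \<kappa>_def c0e Be using final[OF t_gt] .
qed

end
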